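(* Let $V$ be a finite nonempty set, let $Z_V=(Z_i : i\in V)$ be a vector of discrete random variables with joint distribution $P_{Z_V}$, and let $H\colon 2^V\to\mathbb{R}$ be the entropy function $H(X)=H(Z_X)$ (Shannon entropy of $Z_X=(Z_i:i\in X)$), with $H(\emptyset)=0$. Let $w_V=(w_i:i\in V)\in\mathbb{R}_{>0}^{|V|}$ be a positive weight vector. Then the output $r^*_V$ of the call $\mathrm{SPLIT}(V,H,w_V)$ (the recursive procedure described in the context) is the minimizer of $$\min\Big\{\sum_{i\in V}\frac{r_i^2}{w_i} \;:\; r_V\in \mathcal{R}(V,H)\Big\},$$ where $\mathcal{R}(V,H)$ is the Slepian–Wolf region defined in the context.
   Context: For a vector $r_V=(r_i:i\in V)\in\mathbb{R}^{|V|}$ write $r(X)=\sum_{i\in X}r_i$ for $X\subseteq V$ (with $r(\emptyset)=0$), and similarly $w(X)=\sum_{i\in X}w_i$. For a finite set $C$ and a set function $f\colon 2^C\to\mathbb{R}$ with $f(\emptyset)=0$, define $\mathcal{R}(C,f)=\{r_C\in\mathbb{R}^{|C|} : r(X)\le f(X)\ \forall X\subseteq C,\ r(C)=f(C)\}$. In particular the Slepian–Wolf region is $\mathcal{R}(V,H)=\{r_V : r(X)\le H(X)\ \forall X\subseteq V,\ r(V)=H(V)\}$, equivalently the set of $r_V$ with $r(X)\ge H(X\mid V\setminus X)=H(V)-H(V\setminus X)$ for all $X\subseteq V$ and $r(V)=H(V)$. (The entropy function $H$ is submodular.) The procedure $\mathrm{SPLIT}(C,f,w_C)$, taking a nonempty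 finite set $C$, an oracle for a set function $f$ on subsets of $C$, and a positive weight vector $w_C$, is defined recursively as follows: 1. Set $\lambda = f(C)/w(C)$. 2. Let $\hat X$ be the maximal (inclusion-wise largest) minimizer of $\min\{f(X)-\lambda w(X) : X\subseteq C\}$. 3. If $\hat X = C$, return $r^*_C=\lambda w_C$ (i.e. $r^*_i=\lambda w_i$ for $i\in C$). 4. Otherwise: set $r^*_{\hat X}=\mathrm{SPLIT}(\hat X, f, w_{\hat X})$ (with $f$ restricted to subsets of $\hat X$); define $g\colon 2^{C\setminus\hat X}\to\mathbb{R}$ by $g(X)=f(X\sqcup\hat X)-f(\hat X)\big(\tfrac{w(X)}{w(\hat X)}+1\big)$ for $X\subseteq C\setminus\hat X$; set $r^*_{C\setminus\hat X}=\tfrac{f(\hat X)}{w(\hat X)}\,w_{C\setminus\hat X}+\mathrm{SPLIT}(C\setminus\hat X, g, w_{C\setminus\hat X})$; and return $r^*_C=r^*_{\hat X}\oplus r^*_{C\setminus\hat X}$, the vector on $C$ whose restrictions to $\hat X$ and $C\setminus\hat X$ are $r^*_{\hat X}$ and $r^*_{C\setminus\hat X}$ respectively. *)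

theory Defs
  imports "HOL-Probability.Probability_Mass_Function"
begin

definition shannon_entropy :: "'b pmf \<Rightarrow> real" where
  "shannon_entropy q = - (\<Sum>x\<in>set_pmf q. pmf q x * log 2 (pmf q x))"

(* Entropy function H(X) = H(Z_X), where P is the joint distribution of Z_V
   (a random vector z :: 'i \<Rightarrow> 'a), and Z_X is the restriction of z to X *)
definition entropy_fun :: "('i \<Rightarrow> 'a) pmf \<Rightarrow> 'i set \<Rightarrow> real" where
  "entropy_fun P X = shannon_entropy (map_pmf (\<lambda>z. restrict z X) P)"

definition setsum :: "('i \<Rightarrow> real) \<Rightarrow> 'i set \<Rightarrow> real" where
  "setsum r X = (\<Sum>i\<in>X. r i)"

definition region :: "'i set \<Rightarrow> ('i set \<Rightarrow> real) \<Rightarrow> ('i \<Rightarrow> real) set" where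
  "region C f = {r. (\<forall>X. X \<subseteq> C \<longrightarrow> setsum r X \<le> f X) \<and> setsum r C = f C}"

definition max_minimizer :: "'i set \<Rightarrow> ('i set \<Rightarrow> real) \<Rightarrow> 'i set" where
  "max_minimizer C h = (THE X. X \<subseteq> C \<and> (\<forall>Y. Y \<subseteq> C \<longrightarrow> h X \<le> h Y)
                          \<and> (\<forall>Y. Y \<subseteq> C \<and> h Y = h X \<longrightarrow> Y \<subseteq> X))"

(* SPLIT with an explicit recursion-depth bound (fuel); each recursive call is on
   a strictly smaller set, so fuel = card C suffices. Vectors are functions
   'i \<Rightarrow> real; only their values on C are meaningful. *)
fun split_aux :: "nat \<Rightarrow> 'i set \<Rightarrow> ('i set \<Rightarrow> real) \<Rightarrow> ('i \<Rightarrow> real) \<Rightarrow> ('i \<Rightarrow> real)" where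
  "split_aux 0 C f w = (\<lambda>i. 0)"
| "split_aux (Suc n) C f w =
    (let lam = f C / setsum w C;
         Xh = max_minimizer C (\<lambda>X. f X - lam * setsum w X)
     in if Xh = C then (\<lambda>i. lam * w i)
        else
          (let r1 = split_aux n Xh f w;
               g = (\<lambda>X. f (X \<union> Xh) - f Xh * (setsum w X / setsum w Xh + 1));
               r2 = (\<lambda>i. f Xh / setsum w Xh * w i + split_aux n (C - Xh) g w i)
           in (\<lambda>i. if i \<in> Xh then r1 i else r2 i)))"

definition SPLIT :: "'i set \<Rightarrow> ('i set \<Rightarrow> real) \<Rightarrow> ('i \<Rightarrow> real) \<Rightarrow> ('i \<Rightarrow> real)" where
  "SPLIT C f w = split_aux (card C) C f w"

end

theory Submission
  imports Defs
begin



definition pm :: "('i \<Rightarrow> 'a) pmf \<Rightarrow> 'i set \<Rightarrow> ('i \<Rightarrow> 'a) \<Rightarrow> real" where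
  "pm P X z = sum (pmf P) {x\<in>set_pmf P. restrict x X = restrict z X}"

lemma pm_pos:
  assumes "finite (set_pmf P)" "z \<in> set_pmf P"
  shows "pm P X z > 0"
proof -
  have "pmf P z \<le> pm P X z" unfolding pm_def
    by (rule member_le_sum) (use assms in auto)
  moreover have "pmf P z > 0" using assms pmf_positive by metis
  ultimately show ?thesis by linarith
qed

lemma pm_cong:
  assumes "restrict x X = restrict z X"
  shows "pm P X x = pm P X z"
  unfolding pm_def using assms by simp

lemma entropy_fun_eq:
  assumes fin: "finite (set_pmf P)"
  shows "entropy_fun P X = - (\<Sum>z\<in>set_pmf P. pmf P z * log 2 (pm P X z))"
proof -
  define S where "S = set_pmf P"
  define g where "g = (\<lambda>z::'a \<Rightarrow> 'b. restrict z X)"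
  define Q where "Q = map_pmf g P"
  have pQ: "pmf Q (g z) = pm P X z" for z
  proof -
    have "pmf Q (g z) = measure P (g -` {g z})" unfolding Q_def by (rule pmf_map)
    also have "\<dots> = measure P (g -` {g z} \<inter> S)" unfolding S_def by (rule measure_Int_set_pmf[symmetric])
    also have "\<dots> = sum (pmf P) (g -` {g z} \<inter> S)"
      by (rule measure_measure_pmf_finite) (use fin S_def in auto)
    also have "g -` {g z} \<inter> S = {x\<in>set_pmf P. restrict x X = restrict z X}"
      unfolding g_def S_def by auto
    finally show ?thesis unfolding pm_def .
  qed
  have "(\<Sum>u\<in>set_pmf Q. pmf Q u * log 2 (pmf Q u))
      = (\<Sum>u\<in>g ` S. (\<Sum>z\<in>{x. x \<in> S \<and> g x = u}. pmf P z) * log 2 (pmf Q u))"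
  proof (rule sum.cong)
    show "set_pmf Q = g ` S" unfolding Q_def S_def by simp
  next
    fix u assume "u \<in> g ` S"
    then obtain z where z: "z \<in> S" "u = g z" by auto
    have "pmf Q u = pm P X z" using pQ z by simp
    also have "\<dots> = (\<Sum>z\<in>{x. x \<in> S \<and> g x = u}. pmf P z)"
      unfolding pm_def S_def z g_def by (rule sum.cong) auto
    finally show "pmf Q u * log 2 (pmf Q u) = (\<Sum>z\<in>{x. x \<in> S \<and> g x = u}. pmf P z) * log 2 (pmf Q u)"
      by simp
  qed
  also have "\<dots> = (\<Sum>u\<in>g ` S. \<Sum>z\<in>{x. x \<in> S \<and> g x = u}. pmf P z * log 2 (pmf Q (g z)))"
    by (rule sum.cong) (auto simp: sum_distrib_right)
  also have "\<dots> = (\<Sum>z\<in>S. pmf P z * log 2 (pmf Q (g z)))"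
    by (rule sum.image_gen[symmetric]) (use fin S_def in auto)
  also have "\<dots> = (\<Sum>z\<in>S. pmf P z * log 2 (pm P X z))"
    using pQ by simp
  finally show ?thesis
    unfolding entropy_fun_def shannon_entropy_def Q_def g_def S_def by simp
qed

lemma res_eq: "restrict x X = restrict z X \<longleftrightarrow> (\<forall>i\<in>X. x i = z i)"
  unfolding restrict_def fun_eq_iff by metis

lemma T_le_1:
  assumes fin: "finite (set_pmf P)"
  shows "(\<Sum>z\<in>set_pmf P. pmf P z * (pm P X z * pm P Y z / (pm P (X \<union> Y) z * pm P (X \<inter> Y) z))) \<le> 1"
proof -
  define S where "S = set_pmf P"
  define p where "p = pmf P"
  define A where "A = X \<inter> Y"
  define B where "B = X \<union> Y"
  have finS: "finite S" using fin S_def by simp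
  define F where "F = (\<lambda>x y z. if restrict x X = restrict z X \<and> restrict y Y = restrict z Y
      then p x * p y / pm P A x * (p z / pm P B z) else 0)"
  have pmS: "pm P Z z = (\<Sum>x\<in>S. if restrict x Z = restrict z Z then p x else 0)" for Z z
    unfolding pm_def S_def p_def by (rule sum.inter_filter) (use fin in simp)
  have step2: "p z * (pm P X z * pm P Y z / (pm P B z * pm P A z)) = (\<Sum>x\<in>S. \<Sum>y\<in>S. F x y z)"
    if "z \<in> S" for z
  proof -
    have "pm P X z * pm P Y z = (\<Sum>x\<in>S. \<Sum>y\<in>S. (if restrict x X = restrict z X then p x else 0) *
          (if restrict y Y = restrict z Y then p y else 0))"
      unfolding pmS[of X] pmS[of Y] by (rule sum_product)
    hence "p z * (pm P X z * pm P Y z / (pm P B z * pm P A z)) =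
       (\<Sum>x\<in>S. \<Sum>y\<in>S. p z * ((if restrict x X = restrict z X then p x else 0) *
          (if restrict y Y = restrict z Y then p y else 0)) / (pm P B z * pm P A z))"
      by (simp add: sum_distrib_left sum_divide_distrib)
    also have "\<dots> = (\<Sum>x\<in>S. \<Sum>y\<in>S. F x y z)"
    proof (intro sum.cong refl)
      fix x y assume "x \<in> S" "y \<in> S"
      show "p z * ((if restrict x X = restrict z X then p x else 0) *
          (if restrict y Y = restrict z Y then p y else 0)) / (pm P B z * pm P A z) = F x y z"
      proof (cases "restrict x X = restrict z X \<and> restrict y Y = restrict z Y")
        case True
        hence "restrict x A = restrict z A" unfolding A_def res_eq by auto
        hence "pm P A x = pm P A z" by (rule pm_cong)
        thus ?thesis using True unfolding F_def by (simp add: ac_simps)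
      next
        case False thus ?thesis unfolding F_def by auto
      qed
    qed
    finally show ?thesis .
  qed
  have step4: "(\<Sum>z\<in>S. F x y z) \<le> (if restrict x A = restrict y A then p x * p y / pm P A x else 0)"
    if "x \<in> S" "y \<in> S" for x y
  proof -
    define I where "I = (\<Sum>z\<in>S. if restrict x X = restrict z X \<and> restrict y Y = restrict z Y
       then p z / pm P B z else 0)"
    have eq: "(\<Sum>z\<in>S. F x y z) = p x * p y / pm P A x * I"
      unfolding I_def F_def sum_distrib_left by (rule sum.cong) auto
    have nn: "p x * p y / pm P A x \<ge> 0" unfolding p_def pm_def by (simp add: sum_nonneg)
    show ?thesis
    proof (cases "\<exists>z0\<in>S. restrict x X = restrict z0 X \<and> restrict y Y = restrict z0 Y")
      case True
      then obtain z0 where z0: "z0 \<in> S" "restrict x X = restrict z0 X" "restrict y Y = restrict z0 Y" by auto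
      have xyA: "restrict x A = restrict y A" using z0 unfolding A_def res_eq by auto
      have "I = (\<Sum>z\<in>S. if restrict z B = restrict z0 B then p z / pm P B z0 else 0)"
        unfolding I_def
      proof (rule sum.cong[OF refl])
        fix z assume "z \<in> S"
        have c: "(restrict x X = restrict z X \<and> restrict y Y = restrict z Y) \<longleftrightarrow> restrict z B = restrict z0 B"
          using z0 unfolding B_def res_eq by auto
        show "(if restrict x X = restrict z X \<and> restrict y Y = restrict z Y then p z / pm P B z else 0) =
          (if restrict z B = restrict z0 B then p z / pm P B z0 else 0)"
          using pm_cong[of z B z0 P] c by auto
      qed
      also have "\<dots> = (\<Sum>z\<in>S. if restrict z B = restrict z0 B then p z else 0) / pm P B z0"
        unfolding sum_divide_distrib by (rule sum.cong) auto
      also have "(\<Sum>z\<in>S. if restrict z B = restrict z0 B then p z else 0) = pm P B z0"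
        unfolding pmS ..
      also have "pm P B z0 / pm P B z0 = 1" using pm_pos[OF fin, of z0 B] z0 S_def by simp
      finally show ?thesis using eq xyA by simp
    next
      case False
      hence "I = 0" unfolding I_def by (intro sum.neutral) auto
      thus ?thesis using eq nn by simp
    qed
  qed
  have "(\<Sum>z\<in>set_pmf P. pmf P z * (pm P X z * pm P Y z / (pm P (X \<union> Y) z * pm P (X \<inter> Y) z)))
      = (\<Sum>z\<in>S. \<Sum>x\<in>S. \<Sum>y\<in>S. F x y z)"
    using step2 unfolding S_def p_def A_def B_def by simp
  also have "\<dots> = (\<Sum>x\<in>S. \<Sum>z\<in>S. \<Sum>y\<in>S. F x y z)" by (rule sum.swap)
  also have "\<dots> = (\<Sum>x\<in>S. \<Sum>y\<in>S. \<Sum>z\<in>S. F x y z)" by (rule sum.cong[OF refl], rule sum.swap)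
  also have "\<dots> \<le> (\<Sum>x\<in>S. \<Sum>y\<in>S. if restrict x A = restrict y A then p x * p y / pm P A x else 0)"
    by (intro sum_mono step4)
  also have "\<dots> = (\<Sum>x\<in>S. p x)"
  proof (rule sum.cong[OF refl])
    fix x assume x: "x \<in> S"
    have "(\<Sum>y\<in>S. if restrict x A = restrict y A then p x * p y / pm P A x else 0)
        = p x / pm P A x * (\<Sum>y\<in>S. if restrict y A = restrict x A then p y else 0)"
      unfolding sum_distrib_left by (rule sum.cong) auto
    also have "\<dots> = p x / pm P A x * pm P A x" unfolding pmS ..
    also have "\<dots> = p x" using pm_pos[OF fin, of x A] x S_def by simp
    finally show "(\<Sum>y\<in>S. if restrict x A = restrict y A then p x * p y / pm P A x else 0) = p x" .
  qed
  also have "\<dots> = 1" unfolding p_def S_def by (rule sum_pmf_eq_1) (use fin in auto)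
  finally show ?thesis .
qed

lemma entropy_submod:
  assumes fin: "finite (set_pmf P)"
  shows "entropy_fun P (X \<union> Y) + entropy_fun P (X \<inter> Y) \<le> entropy_fun P X + entropy_fun P Y"
proof -
  define S where "S = set_pmf P"
  define R where "R = (\<lambda>z. pm P X z * pm P Y z / (pm P (X \<union> Y) z * pm P (X \<inter> Y) z))"
  have Rpos: "R z > 0" if "z \<in> S" for z
    unfolding R_def using pm_pos[OF fin] that S_def by simp
  have lg: "log 2 (R z) = log 2 (pm P X z) + log 2 (pm P Y z) - log 2 (pm P (X \<union> Y) z) - log 2 (pm P (X \<inter> Y) z)"
    if "z \<in> S" for z
  proof -
    have a: "pm P X z > 0" "pm P Y z > 0" "pm P (X \<union> Y) z > 0" "pm P (X \<inter> Y) z > 0"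
      using pm_pos[OF fin] that S_def by auto
    show ?thesis unfolding R_def using a by (simp add: log_mult log_divide)
  qed
  have le: "pmf P z * log 2 (R z) \<le> pmf P z * ((R z - 1) / ln 2)" if "z \<in> S" for z
  proof -
    have "log 2 (R z) = ln (R z) / ln 2" by (simp add: log_def)
    also have "\<dots> \<le> (R z - 1) / ln 2"
      using ln_le_minus_one[OF Rpos[OF that]] by (simp add: divide_right_mono)
    finally have "log 2 (R z) \<le> (R z - 1) / ln 2" .
    thus ?thesis by (metis mult_left_mono pmf_nonneg)
  qed
  have "(\<Sum>z\<in>S. pmf P z * log 2 (R z)) \<le> (\<Sum>z\<in>S. pmf P z * ((R z - 1) / ln 2))"
    by (rule sum_mono) (rule le)
  also have "\<dots> = ((\<Sum>z\<in>S. pmf P z * R z) - (\<Sum>z\<in>S. pmf P z)) / ln 2"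
    by (simp add: sum_divide_distrib[symmetric] sum_subtractf right_diff_distrib)
  also have "(\<Sum>z\<in>S. pmf P z) = 1" unfolding S_def by (rule sum_pmf_eq_1) (use fin in auto)
  also have "((\<Sum>z\<in>S. pmf P z * R z) - 1) / ln 2 \<le> 0"
    using T_le_1[OF fin, of X Y] unfolding R_def S_def by (simp add: divide_nonpos_pos)
  finally have key: "(\<Sum>z\<in>S. pmf P z * log 2 (R z)) \<le> 0" .
  have "(\<Sum>z\<in>S. pmf P z * log 2 (R z)) = (\<Sum>z\<in>S. pmf P z * log 2 (pm P X z)) + (\<Sum>z\<in>S. pmf P z * log 2 (pm P Y z))
     - (\<Sum>z\<in>S. pmf P z * log 2 (pm P (X \<union> Y) z)) - (\<Sum>z\<in>S. pmf P z * log 2 (pm P (X \<inter> Y) z))"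
    by (simp add: lg sum_subtractf sum.distrib right_diff_distrib distrib_left cong: sum.cong)
  with key show ?thesis unfolding entropy_fun_eq[OF fin] S_def by linarith
qed

lemma entropy_empty:
  assumes fin: "finite (set_pmf P)"
  shows "entropy_fun P {} = 0"
proof -
  have "pm P {} z = 1" for z
  proof -
    have "{x\<in>set_pmf P. restrict x {} = restrict z {}} = set_pmf P" by (auto simp: restrict_def)
    thus ?thesis unfolding pm_def by (simp add: sum_pmf_eq_1 fin)
  qed
  thus ?thesis unfolding entropy_fun_eq[OF fin] by simp
qed




lemma levels_ineq_aux:
  "card (y ` C) = n \<Longrightarrow> finite C \<Longrightarrow> (\<forall>c. sum d {i\<in>C. y i \<le> c} \<le> (0::real)) \<Longrightarrow> sum d C = 0
   \<Longrightarrow> 0 \<le> (\<Sum>i\<in>C. y i * d i)"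
proof (induction n arbitrary: y rule: less_induct)
  case (less n y)
  have finY: "finite (y ` C)" using less.prems by simp
  show ?case
  proof (cases "card (y ` C) \<le> 1")
    case True
    show ?thesis
    proof (cases "C = {}")
      case True thus ?thesis by simp
    next
      case False
      then obtain i0 where i0: "i0 \<in> C" by auto
      have "card (y ` C) \<le> Suc 0" using True by simp
      hence all: "\<forall>a\<in>y ` C. \<forall>b\<in>y ` C. a = b" using card_le_Suc0_iff_eq[OF finY] by blast
      have yi: "y i = y i0" if "i \<in> C" for i using all that i0 by blast
      have "(\<Sum>i\<in>C. y i * d i) = (\<Sum>i\<in>C. y i0 * d i)"
        by (rule sum.cong) (simp_all add: yi)
      also have "\<dots> = 0" using less.prems by (simp add: sum_distrib_left[symmetric])
      finally show ?thesis by simp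
    qed
  next
    case False
    define m where "m = Min (y ` C)"
    define V' where "V' = y ` C - {m}"
    have Cne: "C \<noteq> {}" using False by auto
    have mY: "m \<in> y ` C" unfolding m_def using Cne finY by (intro Min_in) auto
    have mle: "m \<le> y i" if "i \<in> C" for i unfolding m_def using finY that by simp
    have cardV: "card V' = card (y ` C) - 1" unfolding V'_def using mY finY by simp
    have V'ne: "V' \<noteq> {}" using cardV False by auto
    define m2 where "m2 = Min V'"
    have finV: "finite V'" unfolding V'_def using finY by simp
    have m2V: "m2 \<in> V'" unfolding m2_def using finV V'ne by (rule Min_in)
    have m2le: "m2 \<le> v" if "v \<in> V'" for v unfolding m2_def using finV that by simp
    have mm2: "m < m2"
    proof -
      obtain i where "i \<in> C" "m2 = y i" "m2 \<noteq> m" using m2V unfolding V'_def by auto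
      thus ?thesis using mle[of i] by simp
    qed
    define y' where "y' = (\<lambda>i. max (y i) m2)"
    have y'C: "y' ` C = V'"
    proof
      show "y' ` C \<subseteq> V'"
      proof
        fix v assume "v \<in> y' ` C"
        then obtain i where i: "i \<in> C" "v = y' i" by auto
        show "v \<in> V'"
        proof (cases "y i = m")
          case True thus ?thesis using i mm2 m2V unfolding y'_def by simp
        next
          case False
          hence "y i \<in> V'" unfolding V'_def using i by auto
          thus ?thesis using i m2le m2V unfolding y'_def by (simp add: max_def)
        qed
      qed
    next
      show "V' \<subseteq> y' ` C"
      proof
        fix v assume v: "v \<in> V'"
        then obtain i where i: "i \<in> C" "v = y i" unfolding V'_def by auto
        hence "y' i = v" using m2le[OF v] unfolding y'_def by simp
        thus "v \<in> y' ` C" using i(1) by (metis imageI)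
      qed
    qed
    have lt: "card (y' ` C) < n" unfolding y'C cardV using less.prems(1) False by linarith
    have lev': "\<forall>c. sum d {i\<in>C. y' i \<le> c} \<le> 0"
    proof
      fix c
      show "sum d {i\<in>C. y' i \<le> c} \<le> 0"
      proof (cases "c < m2")
        case True
        hence "{i\<in>C. y' i \<le> c} = {}" unfolding y'_def by auto
        thus ?thesis by (metis sum.empty order_refl)
      next
        case False
        hence "{i\<in>C. y' i \<le> c} = {i\<in>C. y i \<le> c}" unfolding y'_def by auto
        thus ?thesis using less.prems(3) by metis
      qed
    qed
    have IH: "0 \<le> (\<Sum>i\<in>C. y' i * d i)"
      using less.IH[OF lt refl less.prems(2) lev' less.prems(4)] .
    have pw: "y i * d i = y' i * d i - (m2 - m) * (if y i \<le> m then d i else 0)" if "i \<in> C" for i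
    proof (cases "y i \<le> m")
      case True
      hence "y i = m" using mle[OF that] by simp
      thus ?thesis using mm2 unfolding y'_def by (simp add: max_def algebra_simps)
    next
      case False
      hence "y i \<in> V'" unfolding V'_def using that by auto
      hence "m2 \<le> y i" using m2le by blast
      hence "y' i = y i" unfolding y'_def by (simp add: max_def)
      thus ?thesis using False by simp
    qed
    have "(\<Sum>i\<in>C. y i * d i) = (\<Sum>i\<in>C. y' i * d i) - (m2 - m) * (\<Sum>i\<in>C. if y i \<le> m then d i else 0)"
      by (simp add: pw sum_subtractf sum_distrib_left cong: sum.cong)
    also have "(\<Sum>i\<in>C. if y i \<le> m then d i else 0) = sum d {i\<in>C. y i \<le> m}"
      by (rule sum.inter_filter[symmetric]) (use less.prems in simp)
    finally have "(\<Sum>i\<in>C. y i * d i) = (\<Sum>i\<in>C. y' i * d i) - (m2 - m) * sum d {i\<in>C. y i \<le> m}" .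
    moreover have "(m2 - m) * sum d {i\<in>C. y i \<le> m} \<le> 0"
      using mm2 less.prems(3) by (simp add: mult_nonneg_nonpos)
    ultimately show ?thesis using IH by linarith
  qed
qed




definition submod_on :: "'i set \<Rightarrow> ('i set \<Rightarrow> real) \<Rightarrow> bool" where
  "submod_on C f = (\<forall>X Y. X \<subseteq> C \<longrightarrow> Y \<subseteq> C \<longrightarrow> f (X \<union> Y) + f (X \<inter> Y) \<le> f X + f Y)"

lemma submod_on_subset: "submod_on C f \<Longrightarrow> D \<subseteq> C \<Longrightarrow> submod_on D f"
  unfolding submod_on_def by blast

lemma maxmin:
  assumes fin: "finite C" and sm: "submod_on C h"
  shows "max_minimizer C h \<subseteq> C \<and> (\<forall>Y. Y \<subseteq> C \<longrightarrow> h (max_minimizer C h) \<le> h Y)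
     \<and> (\<forall>Y. Y \<subseteq> C \<and> h Y = h (max_minimizer C h) \<longrightarrow> Y \<subseteq> max_minimizer C h)"
proof -
  define Q where "Q = (\<lambda>X. X \<subseteq> C \<and> (\<forall>Y. Y \<subseteq> C \<longrightarrow> h X \<le> h Y)
                          \<and> (\<forall>Y. Y \<subseteq> C \<and> h Y = h X \<longrightarrow> Y \<subseteq> X))"
  have finP: "finite (Pow C)" using fin by simp
  define m where "m = Min (h ` Pow C)"
  have mle: "m \<le> h Y" if "Y \<subseteq> C" for Y unfolding m_def using finP that by simp
  have "m \<in> h ` Pow C" unfolding m_def using finP by (intro Min_in) auto
  then obtain X1 where X1: "X1 \<subseteq> C" "h X1 = m" by auto
  define M where "M = {X. X \<subseteq> C \<and> h X = m}"
  have finM: "finite M" unfolding M_def using finP by (rule rev_finite_subset) auto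
  have "M \<noteq> {}" using X1 unfolding M_def by auto
  define k where "k = Max (card ` M)"
  have "k \<in> card ` M" unfolding k_def using finM \<open>M \<noteq> {}\<close> by (intro Max_in) auto
  then obtain X0 where X0: "X0 \<in> M" "card X0 = k" by auto
  have kle: "card Y \<le> k" if "Y \<in> M" for Y unfolding k_def using finM that by simp
  have X0C: "X0 \<subseteq> C" and hX0: "h X0 = m" using X0 unfolding M_def by auto
  have QX0: "Q X0"
    unfolding Q_def
  proof (intro conjI allI impI)
    show "X0 \<subseteq> C" by fact
    fix Y assume "Y \<subseteq> C" thus "h X0 \<le> h Y" using mle hX0 by simp
  next
    fix Y assume Y: "Y \<subseteq> C \<and> h Y = h X0"
    have "h (X0 \<union> Y) + h (X0 \<inter> Y) \<le> h X0 + h Y" using sm X0C Y unfolding submod_on_def by blast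
    moreover have "m \<le> h (X0 \<inter> Y)" using mle X0C by (meson inf_le1 order_trans)
    moreover have "m \<le> h (X0 \<union> Y)" using mle X0C Y by (meson le_sup_iff)
    ultimately have "h (X0 \<union> Y) = m" using Y hX0 by linarith
    hence "X0 \<union> Y \<in> M" unfolding M_def using X0C Y by auto
    hence "card (X0 \<union> Y) \<le> card X0" using kle X0 by simp
    moreover have "finite (X0 \<union> Y)" using fin X0C Y by (meson finite_subset le_sup_iff)
    ultimately have "X0 \<union> Y = X0" by (metis Un_upper1 card_seteq)
    thus "Y \<subseteq> X0" by blast
  qed
  have uniq: "X = X0" if QX: "Q X" for X
  proof -
    have a: "X \<subseteq> C" "\<forall>Y. Y \<subseteq> C \<longrightarrow> h X \<le> h Y" "\<forall>Y. Y \<subseteq> C \<and> h Y = h X \<longrightarrow> Y \<subseteq> X"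
      using QX unfolding Q_def by blast+
    have b: "X0 \<subseteq> C" "\<forall>Y. Y \<subseteq> C \<longrightarrow> h X0 \<le> h Y" "\<forall>Y. Y \<subseteq> C \<and> h Y = h X0 \<longrightarrow> Y \<subseteq> X0"
      using QX0 unfolding Q_def by blast+
    have "h X \<le> h X0" using a(2) b(1) by blast
    moreover have "h X0 \<le> h X" using b(2) a(1) by blast
    ultimately have e: "h X = h X0" by simp
    have "X \<subseteq> X0" using b(3) a(1) e by blast
    moreover have "X0 \<subseteq> X" using a(3) b(1) e by simp
    ultimately show ?thesis by (rule subset_antisym)
  qed
  have "Q (THE X. Q X)" by (rule theI[of Q X0]) (rule QX0, rule uniq)
  thus ?thesis unfolding max_minimizer_def Q_def .
qed

definition tight_levels :: "'i set \<Rightarrow> ('i set \<Rightarrow> real) \<Rightarrow> ('i \<Rightarrow> real) \<Rightarrow> ('i \<Rightarrow> real) \<Rightarrow> bool" where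
  "tight_levels C f r w = (\<forall>c. sum r {i\<in>C. r i / w i \<le> c} = f {i\<in>C. r i / w i \<le> c})"

lemma modular_w: "finite C \<Longrightarrow> X \<subseteq> C \<Longrightarrow> Y \<subseteq> C \<Longrightarrow>
    sum w (X \<union> Y) + sum w (X \<inter> Y) = sum w X + sum w Y"
  by (metis finite_subset sum.union_inter)

lemma wpos: "finite C \<Longrightarrow> \<forall>i\<in>C. w i > (0::real) \<Longrightarrow> X \<subseteq> C \<Longrightarrow> X \<noteq> {} \<Longrightarrow> sum w X > 0"
  by (meson finite_subset subsetD sum_pos)




lemma split_inv:
  "card C \<le> n \<Longrightarrow> finite C \<Longrightarrow> C \<noteq> {} \<Longrightarrow> \<forall>i\<in>C. w i > 0 \<Longrightarrow> submod_on C f \<Longrightarrow> f {} = 0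
   \<Longrightarrow> split_aux n C f w \<in> region C f \<and> tight_levels C f (split_aux n C f w) w"
proof (induction n arbitrary: C f)
  case 0
  thus ?case by simp
next
  case (Suc n C f)
  note fin = Suc.prems(2) and Cne = Suc.prems(3) and wp = Suc.prems(4) and sm = Suc.prems(5)
    and f0 = Suc.prems(6)
  define lam where "lam = f C / setsum w C"
  define h where "h = (\<lambda>X. f X - lam * setsum w X)"
  define Xh where "Xh = max_minimizer C h"
  define g where "g = (\<lambda>X. f (X \<union> Xh) - f Xh * (setsum w X / setsum w Xh + 1))"
  define a where "a = f Xh / setsum w Xh"
  have eq: "split_aux (Suc n) C f w = (if Xh = C then (\<lambda>i. lam * w i)
     else (\<lambda>i. if i \<in> Xh then split_aux n Xh f w i else a * w i + split_aux n (C - Xh) g w i))"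
    unfolding split_aux.simps Let_def lam_def[symmetric] h_def[symmetric] Xh_def[symmetric]
      g_def[symmetric] a_def[symmetric] by (rule refl)
  have wC: "sum w C > 0" using wpos[OF fin wp] Cne by simp
  have hsm: "submod_on C h"
    unfolding submod_on_def
  proof (intro allI impI)
    fix X Y assume XY: "X \<subseteq> C" "Y \<subseteq> C"
    have "f (X \<union> Y) + f (X \<inter> Y) \<le> f X + f Y" using sm XY unfolding submod_on_def by blast
    moreover have "sum w (X \<union> Y) + sum w (X \<inter> Y) = sum w X + sum w Y" using modular_w[OF fin XY] .
    hence "lam * sum w (X \<union> Y) + lam * sum w (X \<inter> Y) = lam * sum w X + lam * sum w Y"
      by (metis distrib_left)
    ultimately show "h (X \<union> Y) + h (X \<inter> Y) \<le> h X + h Y"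
      unfolding h_def setsum_def by linarith
  qed
  have MM: "Xh \<subseteq> C" "\<And>Y. Y \<subseteq> C \<Longrightarrow> h Xh \<le> h Y" "\<And>Y. Y \<subseteq> C \<Longrightarrow> h Y = h Xh \<Longrightarrow> Y \<subseteq> Xh"
    using maxmin[OF fin hsm] unfolding Xh_def[symmetric] by blast+
  have h0: "h {} = 0" unfolding h_def setsum_def using f0 by simp
  have hC: "h C = 0" unfolding h_def lam_def setsum_def using wC by simp
  show ?case
  proof (cases "Xh = C")
    case True
    define r where "r = (\<lambda>i. lam * w i)"
    have req: "split_aux (Suc n) C f w = r" using eq True r_def by simp
    have sr: "sum r X = lam * sum w X" for X unfolding r_def by (simp add: sum_distrib_left)
    have reg: "r \<in> region C f"
      unfolding region_def setsum_def
    proof (intro CollectI conjI allI impI)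
      fix X assume "X \<subseteq> C"
      hence "h C \<le> h X" using MM(2) True by simp
      thus "sum r X \<le> f X" unfolding sr using hC unfolding h_def setsum_def by simp
    next
      show "sum r C = f C" unfolding sr lam_def setsum_def using wC by simp
    qed
    have tl: "tight_levels C f r w"
      unfolding tight_levels_def
    proof
      fix c
      have rw: "r i / w i = lam" if "i \<in> C" for i using wp that unfolding r_def by force
      show "sum r {i\<in>C. r i / w i \<le> c} = f {i\<in>C. r i / w i \<le> c}"
      proof (cases "lam \<le> c")
        case True
        hence "{i\<in>C. r i / w i \<le> c} = C" using rw by auto
        thus ?thesis using reg unfolding region_def setsum_def by simp
      next
        case False
        hence "{i\<in>C. r i / w i \<le> c} = {}" using rw by auto
        thus ?thesis using f0 by (metis sum.empty)
      qed
    qed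
    show ?thesis using reg tl req by simp
  next
    case False
    have XhC: "Xh \<subset> C" using MM(1) False by blast
    have hneg: "h Xh < 0"
    proof (rule ccontr)
      assume "\<not> h Xh < 0"
      hence "h C = h Xh" using MM(2)[of C] hC by simp
      hence "C \<subseteq> Xh" using MM(3)[of C] by simp
      thus False using XhC by blast
    qed
    have Xhne: "Xh \<noteq> {}" using hneg h0 by auto
    define D where "D = C - Xh"
    have Dne: "D \<noteq> {}" unfolding D_def using XhC by blast
    have DC: "D \<subseteq> C" unfolding D_def by blast
    have finXh: "finite Xh" using fin MM(1) finite_subset by blast
    have finD: "finite D" using fin DC finite_subset by blast
    have wXh: "sum w Xh > 0" using wpos[OF fin wp MM(1) Xhne] .
    have cXh: "card Xh \<le> n" using psubset_card_mono[OF fin XhC] Suc.prems(1) by simp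
    have cD: "card D \<le> n"
    proof -
      have "D \<subset> C" unfolding D_def using Xhne MM(1) by blast
      hence "card D < card C" by (rule psubset_card_mono[OF fin])
      thus ?thesis using Suc.prems(1) by linarith
    qed
    have gform: "g X = f (X \<union> Xh) - f Xh - a * sum w X" for X
    proof -
      have "f Xh * (sum w X / sum w Xh + 1) = a * sum w X + f Xh"
        unfolding a_def setsum_def by (simp add: distrib_left)
      thus ?thesis unfolding g_def setsum_def by linarith
    qed
    have g0: "g {} = 0" unfolding gform by simp
    have gsm: "submod_on D g"
      unfolding submod_on_def
    proof (intro allI impI)
      fix X Y assume XY: "X \<subseteq> D" "Y \<subseteq> D"
      have s1: "X \<union> Xh \<subseteq> C" "Y \<union> Xh \<subseteq> C" using XY DC MM(1) by auto
      have "f ((X \<union> Xh) \<union> (Y \<union> Xh)) + f ((X \<union> Xh) \<inter> (Y \<union> Xh)) \<le> f (X \<union> Xh) + f (Y \<union> Xh)"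
        using sm s1 unfolding submod_on_def by blast
      moreover have "(X \<union> Xh) \<union> (Y \<union> Xh) = (X \<union> Y) \<union> Xh" "(X \<union> Xh) \<inter> (Y \<union> Xh) = (X \<inter> Y) \<union> Xh" by auto
      moreover have "sum w (X \<union> Y) + sum w (X \<inter> Y) = sum w X + sum w Y"
        using modular_w[OF finD XY] .
      ultimately have "f ((X \<union> Y) \<union> Xh) + f ((X \<inter> Y) \<union> Xh) - a * (sum w (X \<union> Y) + sum w (X \<inter> Y))
          \<le> f (X \<union> Xh) + f (Y \<union> Xh) - a * (sum w X + sum w Y)" by simp
      thus "g (X \<union> Y) + g (X \<inter> Y) \<le> g X + g Y" unfolding gform by (simp add: algebra_simps)
    qed
    define r1 where "r1 = split_aux n Xh f w"
    define r2 where "r2 = split_aux n D g w"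
    define r where "r = (\<lambda>i. if i \<in> Xh then r1 i else a * w i + r2 i)"
    have req: "split_aux (Suc n) C f w = r" using eq False unfolding r_def r1_def r2_def D_def by simp
    have IH1: "r1 \<in> region Xh f" "tight_levels Xh f r1 w"
      using Suc.IH[OF cXh finXh Xhne _ submod_on_subset[OF sm MM(1)] f0] wp MM(1) unfolding r1_def by auto
    have IH2: "r2 \<in> region D g" "tight_levels D g r2 w"
      using Suc.IH[OF cD finD Dne _ gsm g0] wp DC unfolding r2_def by auto
    have reg1: "sum r1 X \<le> f X" if "X \<subseteq> Xh" for X using IH1(1) that unfolding region_def setsum_def by blast
    have reg1e: "sum r1 Xh = f Xh" using IH1(1) unfolding region_def setsum_def by blast
    have reg2: "sum r2 X \<le> g X" if "X \<subseteq> D" for X using IH2(1) that unfolding region_def setsum_def by blast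
    have reg2e: "sum r2 D = g D" using IH2(1) unfolding region_def setsum_def by blast
    have sumr: "sum r X = sum r1 (X \<inter> Xh) + a * sum w (X - Xh) + sum r2 (X - Xh)" if "X \<subseteq> C" for X
    proof -
      have finX: "finite X" using fin that finite_subset by blast
      have "sum r X = sum r (X \<inter> Xh) + sum r (X - Xh)" by (rule sum.Int_Diff[OF finX])
      also have "sum r (X \<inter> Xh) = sum r1 (X \<inter> Xh)" unfolding r_def by (rule sum.cong) auto
      also have "sum r (X - Xh) = sum (\<lambda>i. a * w i + r2 i) (X - Xh)" unfolding r_def by (rule sum.cong) auto
      also have "\<dots> = a * sum w (X - Xh) + sum r2 (X - Xh)" by (simp add: sum.distrib sum_distrib_left)
      finally show ?thesis by simp
    qed
    have reg: "r \<in> region C f"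
      unfolding region_def setsum_def
    proof (intro CollectI conjI allI impI)
      fix X assume XC: "X \<subseteq> C"
      have "sum r1 (X \<inter> Xh) \<le> f (X \<inter> Xh)" using reg1 by simp
      moreover have "sum r2 (X - Xh) \<le> g (X - Xh)" using reg2 XC unfolding D_def by blast
      moreover have "(X - Xh) \<union> Xh = X \<union> Xh" by auto
      moreover have "f (X \<union> Xh) + f (X \<inter> Xh) \<le> f X + f Xh" using sm XC MM(1) unfolding submod_on_def by blast
      ultimately show "sum r X \<le> f X" unfolding sumr[OF XC] gform by simp
    next
      have "C \<inter> Xh = Xh" "C - Xh = D" "D \<union> Xh = C" using MM(1) unfolding D_def by auto
      thus "sum r C = f C" unfolding sumr[OF order_refl] using reg1e reg2e unfolding gform by simp
    qed
    have K1: "r1 i / w i \<le> lam" if "i \<in> Xh" for i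
    proof (rule ccontr)
      assume nle: "\<not> r1 i / w i \<le> lam"
      define L where "L = {i\<in>Xh. r1 i / w i \<le> lam}"
      define U where "U = Xh - L"
      have LXh: "L \<subseteq> Xh" unfolding L_def by blast
      have Une: "U \<noteq> {}" unfolding U_def L_def using that nle by blast
      have finU: "finite U" unfolding U_def using finXh by simp
      have tL: "sum r1 L = f L" using IH1(2) unfolding tight_levels_def L_def by blast
      have s1: "sum r1 Xh = sum r1 U + sum r1 L" unfolding U_def by (rule sum.subset_diff[OF LXh finXh])
      have s2: "sum w Xh = sum w U + sum w L" unfolding U_def by (rule sum.subset_diff[OF LXh finXh])
      have "h Xh \<le> h L" using MM(2) LXh MM(1) by blast
      hence "sum r1 U \<le> lam * sum w U" using s1 s2 tL reg1e unfolding h_def setsum_def by (simp add: algebra_simps)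
      moreover have "sum (\<lambda>i. lam * w i) U < sum r1 U"
      proof (rule sum_strict_mono[OF finU Une])
        fix j assume "j \<in> U"
        hence "j \<in> Xh" "\<not> r1 j / w j \<le> lam" unfolding U_def L_def by auto
        moreover have "w j > 0" using wp MM(1) \<open>j \<in> Xh\<close> by blast
        ultimately show "lam * w j < r1 j" by (simp add: pos_divide_le_eq not_le)
      qed
      ultimately show False by (simp add: sum_distrib_left)
    qed
    have K2: "lam - a < r2 i / w i" if "i \<in> D" for i
    proof (rule ccontr)
      assume nle: "\<not> lam - a < r2 i / w i"
      define L where "L = {i\<in>D. r2 i / w i \<le> lam - a}"
      have LD: "L \<subseteq> D" unfolding L_def by blast
      have Lne: "L \<noteq> {}" unfolding L_def using that nle by auto
      have finL: "finite L" using finD LD finite_subset by blast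
      have tL: "sum r2 L = g L" using IH2(2) unfolding tight_levels_def L_def by blast
      have "sum r2 L \<le> sum (\<lambda>i. (lam - a) * w i) L"
      proof (rule sum_mono)
        fix j assume "j \<in> L"
        hence "j \<in> D" "r2 j / w j \<le> lam - a" unfolding L_def by auto
        moreover have "w j > 0" using wp DC \<open>j \<in> D\<close> by blast
        ultimately show "r2 j \<le> (lam - a) * w j" by (simp add: pos_divide_le_eq)
      qed
      hence le1: "sum r2 L \<le> (lam - a) * sum w L" by (simp add: sum_distrib_left)
      have LXC: "L \<union> Xh \<subseteq> C" using LD DC MM(1) by blast
      have "h Xh \<le> h (L \<union> Xh)" using MM(2) LXC by blast
      moreover have "h (L \<union> Xh) \<noteq> h Xh"
      proof
        assume "h (L \<union> Xh) = h Xh"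
        hence "L \<union> Xh \<subseteq> Xh" using MM(3) LXC by blast
        thus False using Lne LD unfolding D_def by blast
      qed
      ultimately have "h Xh < h (L \<union> Xh)" by simp
      moreover have "sum w (L \<union> Xh) = sum w L + sum w Xh"
        by (rule sum.union_disjoint[OF finL finXh]) (use LD in \<open>auto simp: D_def\<close>)
      ultimately have "f (L \<union> Xh) - f Xh > lam * sum w L" unfolding h_def setsum_def by (simp add: algebra_simps)
      hence "g L > (lam - a) * sum w L" unfolding gform by (simp add: algebra_simps)
      thus False using le1 tL by simp
    qed
    have ry1: "r i / w i = r1 i / w i" if "i \<in> Xh" for i unfolding r_def using that by simp
    have ry2: "r i / w i = a + r2 i / w i" if "i \<in> D" for i
    proof -
      have "w i > 0" using wp DC that by blast
      moreover have "i \<notin> Xh" using that unfolding D_def by blast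
      ultimately show ?thesis unfolding r_def by (simp add: field_simps)
    qed
    have tl: "tight_levels C f r w"
      unfolding tight_levels_def
    proof
      fix c
      define Lc where "Lc = {i\<in>C. r i / w i \<le> c}"
      have LcC: "Lc \<subseteq> C" unfolding Lc_def by blast
      show "sum r {i\<in>C. r i / w i \<le> c} = f {i\<in>C. r i / w i \<le> c}"
        unfolding Lc_def[symmetric]
      proof (cases "c \<le> lam")
        case True
        have "Lc = {i\<in>Xh. r1 i / w i \<le> c}"
        proof (rule set_eqI)
          fix i
          show "i \<in> Lc \<longleftrightarrow> i \<in> {i\<in>Xh. r1 i / w i \<le> c}"
          proof (cases "i \<in> Xh")
            case True
            have "i \<in> C" using True MM(1) by blast
            thus ?thesis unfolding Lc_def mem_Collect_eq ry1[OF True] using True by simp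
          next
            case nX: False
            show ?thesis
            proof (cases "i \<in> C")
              case iC: True
              hence "i \<in> D" unfolding D_def using nX by blast
              hence "r i / w i > c" using ry2 K2 True by fastforce
              thus ?thesis unfolding Lc_def using nX by auto
            next
              case False thus ?thesis unfolding Lc_def using MM(1) by auto
            qed
          qed
        qed
        moreover have "sum r {i\<in>Xh. r1 i / w i \<le> c} = sum r1 {i\<in>Xh. r1 i / w i \<le> c}"
          unfolding r_def by (rule sum.cong) auto
        moreover have "sum r1 {i\<in>Xh. r1 i / w i \<le> c} = f {i\<in>Xh. r1 i / w i \<le> c}"
          using IH1(2) unfolding tight_levels_def by blast
        ultimately show "sum r Lc = f Lc" by simp
      next
        case False
        define L' where "L' = {i\<in>D. r2 i / w i \<le> c - a}"
        have L'D: "L' \<subseteq> D" unfolding L'_def by blast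
        have "Lc = Xh \<union> L'"
        proof (rule set_eqI)
          fix i
          show "i \<in> Lc \<longleftrightarrow> i \<in> Xh \<union> L'"
          proof (cases "i \<in> Xh")
            case True
            have "i \<in> C" using True MM(1) by blast
            moreover have "r1 i / w i \<le> c" using K1[OF True] False by simp
            ultimately show ?thesis unfolding Lc_def mem_Collect_eq ry1[OF True] using True by simp
          next
            case nX: False
            show ?thesis
            proof (cases "i \<in> C")
              case iC: True
              hence "i \<in> D" unfolding D_def using nX by blast
              thus ?thesis unfolding Lc_def L'_def using nX ry2 iC by auto
            next
              case False thus ?thesis unfolding Lc_def L'_def D_def using nX by auto
            qed
          qed
        qed
        moreover have "(Xh \<union> L') \<inter> Xh = Xh" "(Xh \<union> L') - Xh = L'" "L' \<union> Xh = Xh \<union> L'"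
          using L'D unfolding D_def by auto
        moreover have "sum r2 L' = g L'" using IH2(2) unfolding tight_levels_def L'_def by blast
        ultimately show "sum r Lc = f Lc" using sumr[OF LcC] reg1e unfolding gform by simp
      qed
    qed
    show ?thesis using reg tl req by simp
  qed
qed




lemma quad_opt:
  fixes r r' w :: "'i \<Rightarrow> real"
  assumes fin: "finite V" and wp: "\<forall>i\<in>V. w i > 0"
    and reg: "r \<in> region V f" and tl: "tight_levels V f r w" and reg': "r' \<in> region V f"
  shows "(\<Sum>i\<in>V. (r i)\<^sup>2 / w i) + (\<Sum>i\<in>V. (r' i - r i)\<^sup>2 / w i) \<le> (\<Sum>i\<in>V. (r' i)\<^sup>2 / w i)"
proof -
  define d where "d = (\<lambda>i. r' i - r i)"
  have lev: "\<forall>c. sum d {i\<in>V. r i / w i \<le> c} \<le> 0"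
  proof
    fix c
    have sub: "{i\<in>V. r i / w i \<le> c} \<subseteq> V" by blast
    have all: "\<forall>X. X \<subseteq> V \<longrightarrow> sum r' X \<le> f X" using reg' unfolding region_def setsum_def by simp
    have "sum r' {i\<in>V. r i / w i \<le> c} \<le> f {i\<in>V. r i / w i \<le> c}"
      using all sub by simp
    moreover have "sum r {i\<in>V. r i / w i \<le> c} = f {i\<in>V. r i / w i \<le> c}"
      using tl unfolding tight_levels_def by blast
    moreover have "sum d {i\<in>V. r i / w i \<le> c} = sum r' {i\<in>V. r i / w i \<le> c} - sum r {i\<in>V. r i / w i \<le> c}"
      unfolding d_def by (rule sum_subtractf)
    ultimately show "sum d {i\<in>V. r i / w i \<le> c} \<le> 0" by linarith
  qed
  have "sum r V = f V" "sum r' V = f V" using reg reg' unfolding region_def setsum_def by simp_all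
  hence s0: "sum d V = 0" unfolding d_def sum_subtractf by simp
  have key: "0 \<le> (\<Sum>i\<in>V. r i / w i * d i)" by (rule levels_ineq_aux[OF refl fin lev s0])
  have pw: "(r' i)\<^sup>2 / w i = (r i)\<^sup>2 / w i + (d i)\<^sup>2 / w i + 2 * (r i / w i * d i)" if "i \<in> V" for i
  proof -
    have "w i > 0" using wp that by blast
    thus ?thesis unfolding d_def by (simp add: field_simps power2_eq_square)
  qed
  have "(\<Sum>i\<in>V. (r' i)\<^sup>2 / w i) = (\<Sum>i\<in>V. (r i)\<^sup>2 / w i) + (\<Sum>i\<in>V. (d i)\<^sup>2 / w i) + 2 * (\<Sum>i\<in>V. r i / w i * d i)"
    by (simp add: pw sum.distrib sum_distrib_left cong: sum.cong)
  thus ?thesis using key unfolding d_def by linarith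
qed

theorem theorem1:
  fixes V :: "'i set" and P :: "('i \<Rightarrow> 'a) pmf" and w :: "'i \<Rightarrow> real"
  assumes "finite V" and "V \<noteq> {}"
    and "finite (set_pmf P)"
    and "\<forall>i\<in>V. w i > 0"
  shows "SPLIT V (entropy_fun P) w \<in> region V (entropy_fun P)
    \<and> (\<forall>r \<in> region V (entropy_fun P).
          (\<Sum>i\<in>V. (SPLIT V (entropy_fun P) w i)\<^sup>2 / w i) \<le> (\<Sum>i\<in>V. (r i)\<^sup>2 / w i))
    \<and> (\<forall>r \<in> region V (entropy_fun P). (\<exists>i\<in>V. r i \<noteq> SPLIT V (entropy_fun P) w i) \<longrightarrow>
          (\<Sum>i\<in>V. (SPLIT V (entropy_fun P) w i)\<^sup>2 / w i) < (\<Sum>i\<in>V. (r i)\<^sup>2 / w i))"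
proof -
  define f where "f = entropy_fun P"
  define s where "s = SPLIT V f w"
  have sm: "submod_on V f" unfolding submod_on_def f_def using entropy_submod[OF assms(3)] by blast
  have f0: "f {} = 0" unfolding f_def by (rule entropy_empty[OF assms(3)])
  have inv: "s \<in> region V f \<and> tight_levels V f s w"
    unfolding s_def SPLIT_def by (rule split_inv[OF order_refl assms(1,2,4) sm f0])
  have opt: "(\<Sum>i\<in>V. (s i)\<^sup>2 / w i) + (\<Sum>i\<in>V. (r i - s i)\<^sup>2 / w i) \<le> (\<Sum>i\<in>V. (r i)\<^sup>2 / w i)"
    if "r \<in> region V f" for r
    using quad_opt[OF assms(1,4) _ _ that] inv by blast
  have nn: "0 \<le> (\<Sum>i\<in>V. (r i - s i)\<^sup>2 / w i)" for r
    using assms(4) by (intro sum_nonneg) (simp add: less_imp_le)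
  have pos: "0 < (\<Sum>i\<in>V. (r i - s i)\<^sup>2 / w i)" if ex: "\<exists>i\<in>V. r i \<noteq> s i" for r
  proof -
    obtain i where i: "i \<in> V" "r i \<noteq> s i" using ex by blast
    show ?thesis
    proof (rule sum_pos2[OF assms(1) i(1)])
      show "0 < (r i - s i)\<^sup>2 / w i" using i assms(4) by simp
      show "\<And>j. j \<in> V \<Longrightarrow> 0 \<le> (r j - s j)\<^sup>2 / w j" using assms(4) by (simp add: less_imp_le)
    qed
  qed
  show ?thesis
    unfolding f_def[symmetric] s_def[symmetric]
  proof (intro conjI ballI impI)
    show "s \<in> region V f" using inv by blast
  next
    fix r assume "r \<in> region V f"
    thus "(\<Sum>i\<in>V. (s i)\<^sup>2 / w i) \<le> (\<Sum>i\<in>V. (r i)\<^sup>2 / w i)" using opt nn[of r] by fastforce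
  next
    fix r assume "r \<in> region V f" "\<exists>i\<in>V. r i \<noteq> s i"
    thus "(\<Sum>i\<in>V. (s i)\<^sup>2 / w i) < (\<Sum>i\<in>V. (r i)\<^sup>2 / w i)" using opt[of r] pos[of r] by linarith
  qed
qed


end
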